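(* Under the standing setting and assumptions (A1)–(A3) described in the context, the following are equivalent: (a) $\mathcal R$ is upper semicontinuous at every point of $\mathcal X$; (b) $\mathcal R(\mathcal K)$ is bounded in $\mathcal M$ for every compact $\mathcal K\subset\mathcal X$; (c) for every $X\in\mathcal X$, every sequence $X_n\to X$ in $\mathcal X$ and every choice $Z_n\in\mathcal R(X_n)$, there exist $Z\in\mathcal R(X)$ and a subsequence $(Z_{n_k})$ with $Z_{n_k}\to Z$.
   Context: Let $\mathcal X$ be a Hausdorff, first countable, locally convex topological vector space over $\mathbb R$, partially ordered by a partial order $\geq$ with positive cone $\mathcal X_+=\{X\in\mathcal X: X\geq 0\}$. Let $\mathcal M\subset\mathcal X$ be a vector subspace with $1<\dim\mathcal M<\infty$, carrying the relative topology (boundedness in $\mathcal M$ refers to any norm on $\mathcal M$), and let $\pi:\mathcal M\to\mathbb R$ be linear. Standing assumptions: (A1) there is $U\in\mathcal M\cap\mathcal X_+$ with $\pi(U)=1$; (A2) $\mathcal A\subsetneq\mathcal X$ is closed, contains $0$, and satisfies $\mathcal A+\mathcal X_+\subset\mathcal A$; (A3) the map $\rho(X)=\inf\{\pi(Z): Z\in\mathcal M,\ X+Z\in\mathcal A\}$ is finitely valued and continuous on $\mathcal X$. The optimal payoff map is $\mathcal R(X)=\{Z\in\mathcal M: X+Z\in\mathcal A,\ \pi(Z)=\rho(X)\}$ and $\mathcal R(\mathcal K)=\bigcup_{X\in\mathcal K}\mathcal R(X)$. $\mathcal R$ is upper semicontinuous at $X$ if for every open $\mathcal U\subset\mathcal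 M$ with $\mathcal R(X)\subset\mathcal U$ there is an open neighborhood $\mathcal U_X$ of $X$ with $\mathcal R(Y)\subset\mathcal U$ for all $Y\in\mathcal U_X$. *)

theory Defs
  imports "HOL-Analysis.Analysis"
begin

definition is_tvs :: "'a::{real_vector,topological_space} itself \<Rightarrow> bool" where
  "is_tvs _ \<longleftrightarrow>
     continuous_on UNIV (\<lambda>p::'a \<times> 'a. fst p + snd p) \<and>
     continuous_on UNIV (\<lambda>p::real \<times> 'a. fst p *\<^sub>R snd p)"

definition is_locally_convex :: "'a::{real_vector,topological_space} itself \<Rightarrow> bool" where
  "is_locally_convex _ \<longleftrightarrow>
     (\<forall>U::'a set. open U \<and> 0 \<in> U \<longrightarrow> (\<exists>V. open V \<and> convex V \<and> 0 \<in> V \<and> V \<subseteq> U))"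

definition is_norm_on :: "'a::real_vector set \<Rightarrow> ('a \<Rightarrow> real) \<Rightarrow> bool" where
  "is_norm_on M nM \<longleftrightarrow>
     (\<forall>x\<in>M. 0 \<le> nM x \<and> (nM x = 0 \<longleftrightarrow> x = 0)) \<and>
     (\<forall>x\<in>M. \<forall>y\<in>M. nM (x + y) \<le> nM x + nM y) \<and>
     (\<forall>x\<in>M. \<forall>c::real. nM (c *\<^sub>R x) = \<bar>c\<bar> * nM x)"

definition linear_on_sub :: "'a::real_vector set \<Rightarrow> ('a \<Rightarrow> real) \<Rightarrow> bool" where
  "linear_on_sub M \<pi> \<longleftrightarrow>
     (\<forall>x\<in>M. \<forall>y\<in>M. \<pi> (x + y) = \<pi> x + \<pi> y) \<and>
     (\<forall>x\<in>M. \<forall>c::real. \<pi> (c *\<^sub>R x) = c * \<pi> x)"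

definition adm_prices :: "'a::real_vector set \<Rightarrow> ('a \<Rightarrow> real) \<Rightarrow> 'a set \<Rightarrow> 'a \<Rightarrow> real set" where
  "adm_prices M \<pi> A X = {\<pi> Z | Z. Z \<in> M \<and> X + Z \<in> A}"

definition rho :: "'a::real_vector set \<Rightarrow> ('a \<Rightarrow> real) \<Rightarrow> 'a set \<Rightarrow> 'a \<Rightarrow> real" where
  "rho M \<pi> A X = Inf (adm_prices M \<pi> A X)"

definition optR :: "'a::real_vector set \<Rightarrow> ('a \<Rightarrow> real) \<Rightarrow> 'a set \<Rightarrow> 'a \<Rightarrow> 'a set" where
  "optR M \<pi> A X = {Z \<in> M. X + Z \<in> A \<and> \<pi> Z = rho M \<pi> A X}"

definition usc_at :: "'a::{real_vector,topological_space} set \<Rightarrow> ('a \<Rightarrow> 'a set) \<Rightarrow> 'a \<Rightarrow> bool" where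
  "usc_at M R X \<longleftrightarrow>
     (\<forall>U. openin (top_of_set M) U \<and> R X \<subseteq> U \<longrightarrow>
        (\<exists>V. open V \<and> X \<in> V \<and> (\<forall>Y\<in>V. R Y \<subseteq> U)))"

end

theory Submission
  imports Defs
begin


lemma cpt_seq_lim:
  fixes f :: "nat \<Rightarrow> 'a::topological_space"
  assumes "f \<longlonglongrightarrow> l" shows "compact (insert l (range f))"
  using compactin_sequence_with_limit[of euclidean f l "range f"] assms by simp

lemma tvs_add:
  fixes f g :: "'b \<Rightarrow> 'a::{real_vector,t2_space}"
  assumes "is_tvs TYPE('a)" "(f \<longlongrightarrow> a) F" "(g \<longlongrightarrow> b) F"
  shows "((\<lambda>x. f x + g x) \<longlongrightarrow> a + b) F"
proof -
  have "isCont (\<lambda>p::'a \<times> 'a. fst p + snd p) (a, b)"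
    using assms(1) unfolding is_tvs_def by (simp add: continuous_on_eq_continuous_at)
  from isCont_tendsto_compose[OF this tendsto_Pair[OF assms(2,3)]] show ?thesis by simp
qed

lemma tvs_scale:
  fixes g :: "'b \<Rightarrow> 'a::{real_vector,t2_space}" and f :: "'b \<Rightarrow> real"
  assumes "is_tvs TYPE('a)" "(f \<longlongrightarrow> a) F" "(g \<longlongrightarrow> b) F"
  shows "((\<lambda>x. f x *\<^sub>R g x) \<longlongrightarrow> a *\<^sub>R b) F"
proof -
  have "isCont (\<lambda>p::real \<times> 'a. fst p *\<^sub>R snd p) (a, b)"
    using assms(1) unfolding is_tvs_def by (simp add: continuous_on_eq_continuous_at)
  from isCont_tendsto_compose[OF this tendsto_Pair[OF assms(2,3)]] show ?thesis by simp
qed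

lemma tvs_diff:
  fixes f g :: "'b \<Rightarrow> 'a::{real_vector,t2_space}"
  assumes "is_tvs TYPE('a)" "(f \<longlongrightarrow> a) F" "(g \<longlongrightarrow> b) F"
  shows "((\<lambda>x. f x - g x) \<longlongrightarrow> a - b) F"
proof -
  have "((\<lambda>x. (-1::real) *\<^sub>R g x) \<longlongrightarrow> (-1) *\<^sub>R b) F"
    by (rule tvs_scale[OF assms(1) tendsto_const assms(3)])
  from tvs_add[OF assms(1,2) this] show ?thesis by simp
qed

lemma tvs_sum:
  fixes f :: "'c \<Rightarrow> 'b \<Rightarrow> 'a::{real_vector,t2_space}"
  assumes "is_tvs TYPE('a)" "finite S" "\<And>i. i \<in> S \<Longrightarrow> (f i \<longlongrightarrow> a i) F"
  shows "((\<lambda>x. \<Sum>i\<in>S. f i x) \<longlongrightarrow> (\<Sum>i\<in>S. a i)) F"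
  using assms(2,3)
proof (induction S rule: finite_induct)
  case empty then show ?case by simp
next
  case (insert y S)
  then show ?case by (simp add: tvs_add[OF assms(1)])
qed

lemma finite_BW:
  fixes c :: "nat \<Rightarrow> 'c \<Rightarrow> real"
  assumes "finite S" "\<And>k b. b \<in> S \<Longrightarrow> \<bar>c k b\<bar> \<le> C"
  shows "\<exists>r d. strict_mono r \<and> (\<forall>b\<in>S. (\<lambda>k. c (r k) b) \<longlonglongrightarrow> d b)"
  using assms
proof (induction S rule: finite_induct)
  case empty
  then show ?case by (auto intro: strict_mono_id)
next
  case (insert y S)
  then obtain r d where r: "strict_mono r" "\<forall>b\<in>S. (\<lambda>k. c (r k) b) \<longlonglongrightarrow> d b" by auto
  have "bounded (range (\<lambda>k. c (r k) y))"
    using insert.prems by (auto simp: bounded_iff)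
  then obtain l r2 where r2: "strict_mono r2" "((\<lambda>k. c (r k) y) \<circ> r2) \<longlonglongrightarrow> l"
    using bounded_imp_convergent_subsequence by blast
  show ?case
  proof (intro exI conjI)
    show "strict_mono (r \<circ> r2)" using r r2 by (simp add: strict_mono_o)
    show "\<forall>b\<in>insert y S. (\<lambda>k. c ((r \<circ> r2) k) b) \<longlonglongrightarrow> (d(y := l)) b"
    proof
      fix b assume "b \<in> insert y S"
      show "(\<lambda>k. c ((r \<circ> r2) k) b) \<longlonglongrightarrow> (d(y := l)) b"
      proof (cases "b = y")
        case True then show ?thesis using r2 by (simp add: o_def)
      next
        case False
        then have "b \<in> S" using \<open>b \<in> insert y S\<close> by simp
        with r(2) have "(\<lambda>k. c (r k) b) \<longlonglongrightarrow> d b" by blast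
        from LIMSEQ_subseq_LIMSEQ[OF this r2(1)] False show ?thesis by (simp add: o_def)
      qed
    qed
  qed
qed


locale fdim =
  fixes B :: "'a::{real_vector,t2_space,first_countable_topology} set" and nM :: "'a \<Rightarrow> real"
  assumes tvs: "is_tvs TYPE('a)" and finB: "finite B" and indB: "independent B"
    and nM: "is_norm_on (span B) nM"
begin

definition Phi :: "('a \<Rightarrow> real) \<Rightarrow> 'a" where "Phi c = (\<Sum>b\<in>B. c b *\<^sub>R b)"
definition l1 :: "('a \<Rightarrow> real) \<Rightarrow> real" where "l1 c = (\<Sum>b\<in>B. \<bar>c b\<bar>)"

lemma Phi_span: "Phi c \<in> span B"
  unfolding Phi_def by (intro span_sum span_scale span_base)

lemma Phi_diff: "Phi c - Phi d = Phi (\<lambda>b. c b - d b)"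
  unfolding Phi_def by (simp add: sum_subtractf scaleR_diff_left)

lemma Phi_scale: "s *\<^sub>R Phi c = Phi (\<lambda>b. s * c b)"
  unfolding Phi_def by (simp add: scaleR_sum_right)

lemma Phi_zero: assumes "Phi c = 0" "b \<in> B" shows "c b = 0"
  using indB assms dependent_finite[OF finB] unfolding Phi_def by auto

lemma Phi_coord: "z \<in> span B \<Longrightarrow> Phi (representation B z) = z"
  unfolding Phi_def using sum_representation_eq[OF indB _ finB] by auto

lemma Phi_tendsto:
  assumes "\<And>b. b \<in> B \<Longrightarrow> (\<lambda>k. c k b) \<longlonglongrightarrow> d b"
  shows "(\<lambda>k. Phi (c k)) \<longlonglongrightarrow> Phi d"
  unfolding Phi_def
  by (rule tvs_sum[OF tvs finB]) (intro tvs_scale[OF tvs] assms tendsto_const)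

lemma l1_ge: "b \<in> B \<Longrightarrow> \<bar>c b\<bar> \<le> l1 c"
  unfolding l1_def using finB by (intro member_le_sum) auto

lemma l1_nonneg: "0 \<le> l1 c" unfolding l1_def by (simp add: sum_nonneg)

lemma nM_sum_le:
  assumes "S \<subseteq> B" shows "nM (\<Sum>b\<in>S. c b *\<^sub>R b) \<le> (\<Sum>b\<in>S. \<bar>c b\<bar> * nM b)"
proof -
  have "finite S" using assms finB finite_subset by blast
  then show ?thesis using assms
  proof (induction S rule: finite_induct)
    case empty
    have "nM 0 = 0" using nM unfolding is_norm_on_def by (auto simp: span_zero)
    then show ?case by simp
  next
    case (insert y S)
    have yB: "y \<in> span B" using insert.prems by (auto intro: span_base)
    have sS: "(\<Sum>b\<in>S. c b *\<^sub>R b) \<in> span B"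
      using insert.prems by (intro span_sum span_scale span_base) auto
    have "nM (\<Sum>b\<in>insert y S. c b *\<^sub>R b) = nM (c y *\<^sub>R y + (\<Sum>b\<in>S. c b *\<^sub>R b))"
      using insert by simp
    also have "\<dots> \<le> nM (c y *\<^sub>R y) + nM (\<Sum>b\<in>S. c b *\<^sub>R b)"
      using nM yB sS unfolding is_norm_on_def by (meson span_scale)
    also have "nM (c y *\<^sub>R y) = \<bar>c y\<bar> * nM y" using nM yB unfolding is_norm_on_def by blast
    finally show ?case using insert by simp
  qed
qed

lemma nM_Phi_le: "nM (Phi c) \<le> (\<Sum>b\<in>B. \<bar>c b\<bar> * nM b)"
  unfolding Phi_def by (rule nM_sum_le) simp


lemma l1_tendsto_zero:
  assumes lim: "(\<lambda>k. Phi (c k)) \<longlonglongrightarrow> 0"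
  shows "(\<lambda>k. l1 (c k)) \<longlonglongrightarrow> 0"
proof (rule ccontr)
  assume "\<not> ?thesis"
  then obtain \<epsilon> where ep: "\<epsilon> > 0" "\<forall>no. \<exists>n\<ge>no. \<epsilon> \<le> l1 (c n)"
    using l1_nonneg by (force simp: LIMSEQ_iff not_less)
  let ?S = "{n. \<epsilon> \<le> l1 (c n)}"
  have infS: "infinite ?S" using ep(2) by (simp add: infinite_nat_iff_unbounded_le)
  obtain r :: "nat \<Rightarrow> nat" where r: "strict_mono r" "\<And>n. r n \<in> ?S" using infinite_enumerate[OF infS] by blast
  define c' where "c' k = c (r k)" for k
  have c'ge: "\<epsilon> \<le> l1 (c' k)" for k using r(2) by (simp add: c'_def)
  have c'pos: "0 < l1 (c' k)" for k using c'ge[of k] ep(1) by linarith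
  have limc': "(\<lambda>k. Phi (c' k)) \<longlonglongrightarrow> 0"
    using LIMSEQ_subseq_LIMSEQ[OF lim r(1)] by (simp add: c'_def o_def)
  define d where "d k = (\<lambda>b. c' k b / l1 (c' k))" for k
  have l1d: "l1 (d k) = 1" for k
    using c'pos[of k] by (simp add: l1_def d_def abs_divide sum_divide_distrib[symmetric])
  have "\<bar>d k b\<bar> \<le> 1" if "b \<in> B" for k b using l1_ge[OF that, of "d k"] l1d by simp
  then obtain r2 e where r2: "strict_mono r2" "\<forall>b\<in>B. (\<lambda>k. d (r2 k) b) \<longlonglongrightarrow> e b"
    using finite_BW[OF finB, of d 1] by blast
  have "(\<lambda>k. l1 (d (r2 k))) \<longlonglongrightarrow> l1 e"
    unfolding l1_def using r2(2) by (intro tendsto_sum tendsto_rabs) auto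
  then have "l1 e = 1" using l1d by (simp add: LIMSEQ_const_iff)
  then obtain b0 where b0: "b0 \<in> B" "e b0 \<noteq> 0" unfolding l1_def
    by (metis (no_types, lifting) abs_zero sum.neutral zero_neq_one)
  define t where "t k = 1 / l1 (c' (r2 k))" for k
  have "\<bar>t k\<bar> \<le> 1 / \<epsilon>" for k
    using c'ge[of "r2 k"] c'pos[of "r2 k"] ep(1) by (simp add: t_def frac_le)
  then have "bounded (range t)" by (auto simp: bounded_iff)
  then obtain ts r3 where r3: "strict_mono r3" "(t \<circ> r3) \<longlonglongrightarrow> ts"
    using bounded_imp_convergent_subsequence by blast
  have eq: "Phi (d (r2 (r3 k))) = t (r3 k) *\<^sub>R Phi (c' (r2 (r3 k)))" for k
    by (simp add: Phi_scale d_def t_def)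
  have l0: "(\<lambda>k. Phi (c' (r2 (r3 k)))) \<longlonglongrightarrow> 0"
    using LIMSEQ_subseq_LIMSEQ[OF limc' strict_mono_o[OF r2(1) r3(1)]] by (simp add: o_def)
  have "(\<lambda>k. t (r3 k) *\<^sub>R Phi (c' (r2 (r3 k)))) \<longlonglongrightarrow> ts *\<^sub>R 0"
    using tvs_scale[OF tvs _ l0] r3(2) by (simp add: o_def)
  then have A: "(\<lambda>k. Phi (d (r2 (r3 k)))) \<longlonglongrightarrow> 0" using eq by simp
  have "(\<lambda>k. d (r2 (r3 k)) b) \<longlonglongrightarrow> e b" if "b \<in> B" for b
    using LIMSEQ_subseq_LIMSEQ[OF r2(2)[rule_format, OF that] r3(1)] by (simp add: o_def)
  then have "(\<lambda>k. Phi (d (r2 (r3 k)))) \<longlonglongrightarrow> Phi e" by (rule Phi_tendsto)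
  with A have "Phi e = 0" using LIMSEQ_unique by blast
  with Phi_zero b0 show False by blast
qed
lemma coord_tendsto_zero:
  assumes "(\<lambda>k. Phi (c k)) \<longlonglongrightarrow> 0" "b \<in> B"
  shows "(\<lambda>k. c k b) \<longlonglongrightarrow> 0"
proof -
  have "(\<lambda>k. l1 (c k)) \<longlonglongrightarrow> 0" by (rule l1_tendsto_zero[OF assms(1)])
  then show ?thesis
    by (rule Lim_null_comparison[rotated]) (use l1_ge[OF assms(2)] in auto)
qed


lemma nM_nonneg: "z \<in> span B \<Longrightarrow> 0 \<le> nM z" using nM unfolding is_norm_on_def by blast
lemma nM_eq0: "z \<in> span B \<Longrightarrow> nM z = 0 \<longleftrightarrow> z = 0" using nM unfolding is_norm_on_def by blast
lemma nM_tri: "x \<in> span B \<Longrightarrow> y \<in> span B \<Longrightarrow> nM (x + y) \<le> nM x + nM y"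
  using nM unfolding is_norm_on_def by blast
lemma nM_scale: "x \<in> span B \<Longrightarrow> nM (s *\<^sub>R x) = \<bar>s\<bar> * nM x"
  using nM unfolding is_norm_on_def by blast

lemma nM_lower: "\<exists>m>0. \<forall>c. m * l1 c \<le> nM (Phi c)"
proof (rule ccontr)
  assume "\<not> ?thesis"
  then have "\<forall>k::nat. \<exists>c. nM (Phi c) < inverse (real (Suc k)) * l1 c"
    by (metis not_le of_nat_0_less_iff positive_imp_inverse_positive zero_less_Suc)
  then obtain c where c: "\<And>k. nM (Phi (c k)) < inverse (real (Suc k)) * l1 (c k)" by metis
  have cpos: "0 < l1 (c k)" for k
  proof -
    have "0 < inverse (real (Suc k)) * l1 (c k)"
      using c[of k] nM_nonneg[OF Phi_span, of "c k"] by linarith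
    then show ?thesis by (simp add: zero_less_mult_iff)
  qed
  define d where "d k = (\<lambda>b. c k b / l1 (c k))" for k
  have l1d: "l1 (d k) = 1" for k
    using cpos[of k] by (simp add: l1_def d_def abs_divide sum_divide_distrib[symmetric])
  have nMd: "nM (Phi (d k)) < inverse (real (Suc k))" for k
  proof -
    have "Phi (d k) = inverse (l1 (c k)) *\<^sub>R Phi (c k)"
      by (simp add: Phi_scale d_def divide_inverse mult.commute)
    then have "nM (Phi (d k)) = inverse (l1 (c k)) * nM (Phi (c k))"
      using nM_scale[OF Phi_span] cpos[of k] by simp
    also have "\<dots> < inverse (l1 (c k)) * (inverse (real (Suc k)) * l1 (c k))"
      using c[of k] cpos[of k] by (simp add: mult_strict_left_mono)
    also have "\<dots> = inverse (real (Suc k))" using cpos[of k] by (simp add: field_simps)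
    finally show ?thesis .
  qed
  have "\<bar>d k b\<bar> \<le> 1" if "b \<in> B" for k b using l1_ge[OF that, of "d k"] l1d by simp
  then obtain r2 e where r2: "strict_mono r2" "\<forall>b\<in>B. (\<lambda>k. d (r2 k) b) \<longlonglongrightarrow> e b"
    using finite_BW[OF finB, of d 1] by blast
  have "(\<lambda>k. l1 (d (r2 k))) \<longlonglongrightarrow> l1 e"
    unfolding l1_def using r2(2) by (intro tendsto_sum tendsto_rabs) auto
  then have "l1 e = 1" using l1d by (simp add: LIMSEQ_const_iff)
  then obtain b0 where b0: "b0 \<in> B" "e b0 \<noteq> 0" unfolding l1_def
    by (metis (no_types, lifting) abs_zero sum.neutral zero_neq_one)
  define g where "g k = inverse (real (Suc k)) + (\<Sum>b\<in>B. \<bar>e b - d (r2 k) b\<bar> * nM b)" for k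
  have "g \<longlonglongrightarrow> 0 + (\<Sum>b\<in>B. \<bar>0\<bar> * nM b)"
    unfolding g_def
  proof (intro tendsto_add tendsto_sum tendsto_mult tendsto_rabs tendsto_const)
    show "(\<lambda>k. inverse (real (Suc k))) \<longlonglongrightarrow> 0" by (rule LIMSEQ_inverse_real_of_nat)
    fix b assume "b \<in> B"
    then show "(\<lambda>k. e b - d (r2 k) b) \<longlonglongrightarrow> 0"
      using r2(2) tendsto_diff[OF tendsto_const, of "\<lambda>k. d (r2 k) b" "e b" _ "e b"] by simp
  qed
  then have glim: "g \<longlonglongrightarrow> 0" by simp
  have le: "nM (Phi e) \<le> g k" for k
  proof -
    have "Phi e = Phi (d (r2 k)) + Phi (\<lambda>b. e b - d (r2 k) b)"
      using Phi_diff[of e "d (r2 k)"] by (simp add: algebra_simps)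
    then have "nM (Phi e) \<le> nM (Phi (d (r2 k))) + nM (Phi (\<lambda>b. e b - d (r2 k) b))"
      using nM_tri[OF Phi_span Phi_span] by simp
    also have "\<dots> \<le> inverse (real (Suc (r2 k))) + (\<Sum>b\<in>B. \<bar>e b - d (r2 k) b\<bar> * nM b)"
      using nMd[of "r2 k"] nM_Phi_le[of "\<lambda>b. e b - d (r2 k) b"] by simp
    also have "inverse (real (Suc (r2 k))) \<le> inverse (real (Suc k))"
      using seq_suble[OF r2(1), of k] by (simp add: le_imp_inverse_le)
    finally show ?thesis by (simp add: g_def)
  qed
  have "nM (Phi e) \<le> 0"
    using glim le by (intro tendsto_le[OF trivial_limit_sequentially glim tendsto_const]) auto
  then have "Phi e = 0" using nM_nonneg[OF Phi_span, of e] nM_eq0[OF Phi_span, of e] by simp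
  with Phi_zero b0 show False by blast
qed


lemma coord_conv:
  assumes "\<And>k. z k \<in> span B" "w \<in> span B" "z \<longlonglongrightarrow> w" "b \<in> B"
  shows "(\<lambda>k. representation B (z k) b) \<longlonglongrightarrow> representation B w b"
proof -
  have "(\<lambda>k. Phi (\<lambda>b. representation B (z k) b - representation B w b)) \<longlonglongrightarrow> 0"
  proof -
    have "(\<lambda>k. z k - w) \<longlonglongrightarrow> w - w" by (rule tvs_diff[OF tvs assms(3) tendsto_const])
    moreover have "Phi (\<lambda>b. representation B (z k) b - representation B w b) = z k - w" for k
      using Phi_diff[symmetric] Phi_coord assms(1,2) by simp
    ultimately show ?thesis by simp
  qed
  from coord_tendsto_zero[OF this assms(4)]
  have "(\<lambda>k. representation B (z k) b - representation B w b + representation B w b)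
      \<longlonglongrightarrow> 0 + representation B w b"
    by (intro tendsto_add tendsto_const)
  then show ?thesis by simp
qed

lemma conv_bounded:
  assumes "\<And>k. z k \<in> span B" "w \<in> span B" "z \<longlonglongrightarrow> w"
  shows "\<exists>C. \<forall>k. nM (z k) \<le> C"
proof -
  define h where "h k = nM w + (\<Sum>b\<in>B. \<bar>representation B (z k) b - representation B w b\<bar> * nM b)" for k
  have "h \<longlonglongrightarrow> nM w + (\<Sum>b\<in>B. \<bar>representation B w b - representation B w b\<bar> * nM b)"
    unfolding h_def using coord_conv[OF assms]
    by (intro tendsto_add tendsto_sum tendsto_mult tendsto_rabs tendsto_diff tendsto_const) auto
  then have "Bseq h" by (rule convergent_imp_Bseq[OF convergentI])
  then obtain K where K: "\<forall>k. norm (h k) \<le> K" using BseqE by blast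
  have "nM (z k) \<le> h k" for k
  proof -
    define dd where "dd = (\<lambda>b. representation B (z k) b - representation B w b)"
    have eq: "z k = w + Phi dd"
      using Phi_diff[symmetric] Phi_coord assms(1,2) by (simp add: dd_def)
    have "nM (z k) \<le> nM w + nM (Phi dd)" unfolding eq by (rule nM_tri[OF assms(2) Phi_span])
    also have "\<dots> \<le> h k" unfolding h_def dd_def using nM_Phi_le by simp
    finally show ?thesis .
  qed
  then have "\<forall>k. nM (z k) \<le> K"
  proof (intro allI)
    fix k assume H: "\<And>k. nM (z k) \<le> h k"
    show "nM (z k) \<le> K" using H[of k] K[rule_format, of k] abs_ge_self[of "h k"] by (simp add: real_norm_def)
  qed
  then show ?thesis by blast
qed

lemma bounded_subseq:
  assumes "\<And>k. z k \<in> span B" "\<And>k. nM (z k) \<le> C"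
  shows "\<exists>r w. strict_mono (r::nat\<Rightarrow>nat) \<and> w \<in> span B \<and> (z \<circ> r) \<longlonglongrightarrow> w"
proof -
  obtain m where m: "m > 0" "\<And>c. m * l1 c \<le> nM (Phi c)" using nM_lower by blast
  have "\<bar>representation B (z k) b\<bar> \<le> C / m" if "b \<in> B" for k b
  proof -
    have "m * l1 (representation B (z k)) \<le> C"
      using m(2)[of "representation B (z k)"] Phi_coord[OF assms(1)] assms(2)[of k] by simp
    then have "l1 (representation B (z k)) \<le> C / m" using m(1) by (simp add: field_simps)
    then show ?thesis using l1_ge[OF that, of "representation B (z k)"] by linarith
  qed
  then obtain r d where r: "strict_mono r" "\<forall>b\<in>B. (\<lambda>k. representation B (z (r k)) b) \<longlonglongrightarrow> d b"
    using finite_BW[OF finB, of "\<lambda>k. representation B (z k)" "C / m"] by blast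
  have "(\<lambda>k. Phi (representation B (z (r k)))) \<longlonglongrightarrow> Phi d"
    using r(2) by (intro Phi_tendsto) auto
  then have "(z \<circ> r) \<longlonglongrightarrow> Phi d" using Phi_coord[OF assms(1)] by (simp add: o_def)
  then show ?thesis using r(1) Phi_span by blast
qed

lemma pi_Phi:
  assumes "linear_on_sub (span B) p"
  shows "p (Phi c) = (\<Sum>b\<in>B. c b * p b)"
proof -
  have "S \<subseteq> B \<Longrightarrow> p (\<Sum>b\<in>S. c b *\<^sub>R b) = (\<Sum>b\<in>S. c b * p b)" for S
  proof -
    assume SB: "S \<subseteq> B"
    have "finite S" using SB finB finite_subset by blast
    then show ?thesis using SB
    proof (induction S rule: finite_induct)
      case empty
      have "p (0 *\<^sub>R 0) = 0 * p 0" using assms unfolding linear_on_sub_def by (blast intro: span_zero)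
      then show ?case by simp
    next
      case (insert y S)
      have yB: "y \<in> span B" using insert.prems by (auto intro: span_base)
      have sS: "(\<Sum>b\<in>S. c b *\<^sub>R b) \<in> span B"
        using insert.prems by (intro span_sum span_scale span_base) auto
      have "p (\<Sum>b\<in>insert y S. c b *\<^sub>R b) = p (c y *\<^sub>R y + (\<Sum>b\<in>S. c b *\<^sub>R b))"
        using insert by simp
      also have "\<dots> = p (c y *\<^sub>R y) + p (\<Sum>b\<in>S. c b *\<^sub>R b)"
        using assms yB sS unfolding linear_on_sub_def by (meson span_scale)
      also have "p (c y *\<^sub>R y) = c y * p y" using assms yB unfolding linear_on_sub_def by blast
      finally show ?case using insert by simp
    qed
  qed
  then show ?thesis unfolding Phi_def by simp
qed

lemma pi_tendsto:
  assumes "linear_on_sub (span B) p" "\<And>k. z k \<in> span B" "w \<in> span B" "z \<longlonglongrightarrow> w"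
  shows "(\<lambda>k. p (z k)) \<longlonglongrightarrow> p w"
proof -
  have "(\<lambda>k. \<Sum>b\<in>B. representation B (z k) b * p b) \<longlonglongrightarrow> (\<Sum>b\<in>B. representation B w b * p b)"
    using coord_conv[OF assms(2-4)] by (intro tendsto_sum tendsto_mult tendsto_const) auto
  moreover have "p (z k) = (\<Sum>b\<in>B. representation B (z k) b * p b)" for k
    using pi_Phi[OF assms(1), of "representation B (z k)"] Phi_coord[OF assms(2)] by simp
  moreover have "p w = (\<Sum>b\<in>B. representation B w b * p b)"
    using pi_Phi[OF assms(1), of "representation B w"] Phi_coord[OF assms(3)] by simp
  ultimately show ?thesis by simp
qed

end

lemma Inf_shift:
  fixes S :: "real set"
  assumes "S \<noteq> {}" "bdd_below S"
  shows "Inf ((\<lambda>x. x - t) ` S) = Inf S - t"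
proof (rule antisym)
  have ne: "(\<lambda>x. x - t) ` S \<noteq> {}" using assms(1) by simp
  have bd: "bdd_below ((\<lambda>x. x - t) ` S)"
    using assms(2) unfolding bdd_below_def by (metis diff_right_mono imageE)
  have "Inf ((\<lambda>x. x - t) ` S) + t \<le> Inf S"
  proof (rule cInf_greatest[OF assms(1)])
    fix x assume "x \<in> S"
    then have "Inf ((\<lambda>x. x - t) ` S) \<le> x - t" by (intro cInf_lower[OF _ bd]) auto
    then show "Inf ((\<lambda>x. x - t) ` S) + t \<le> x" by simp
  qed
  then show "Inf ((\<lambda>x. x - t) ` S) \<le> Inf S - t" by simp
  show "Inf S - t \<le> Inf ((\<lambda>x. x - t) ` S)"
  proof (rule cInf_greatest[OF ne])
    fix y assume "y \<in> (\<lambda>x. x - t) ` S"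
    then obtain x where "x \<in> S" "y = x - t" by blast
    then show "Inf S - t \<le> y" using cInf_lower[OF _ assms(2)] by simp
  qed
qed

lemma seq_openin:
  fixes M S :: "'a::{t2_space,first_countable_topology} set"
  assumes H: "\<And>z f. z \<in> M \<Longrightarrow> z \<notin> S \<Longrightarrow> (\<And>i. f i \<in> S \<inter> M) \<Longrightarrow> f \<longlonglongrightarrow> z \<Longrightarrow> False"
  shows "openin (top_of_set M) (M - S)"
  unfolding openin_subopen[of _ "M - S"]
proof
  fix z assume z: "z \<in> M - S"
  obtain A :: "nat \<Rightarrow> 'a set" where A: "\<And>i. open (A i)" "\<And>i. z \<in> A i"
    "\<And>S. open S \<Longrightarrow> z \<in> S \<Longrightarrow> eventually (\<lambda>i. A i \<subseteq> S) sequentially"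
    using countable_basis_at_decseq[of z] by blast
  show "\<exists>T. openin (top_of_set M) T \<and> z \<in> T \<and> T \<subseteq> M - S"
  proof (rule ccontr)
    assume "\<not> ?thesis"
    then have "\<forall>i. \<exists>y. y \<in> M \<inter> A i \<and> y \<in> S"
      using openin_open_Int[OF A(1)] A(2) z by blast
    then obtain f where f: "\<And>i. f i \<in> M \<inter> A i" "\<And>i. f i \<in> S" by metis
    have "f \<longlonglongrightarrow> z"
    proof (rule topological_tendstoI)
      fix T assume "open T" "z \<in> T"
      from A(3)[OF this] show "eventually (\<lambda>i. f i \<in> T) sequentially"
        by (rule eventually_mono) (use f in auto)
    qed
    then show False using H[of z f] z f by blast
  qed
qed

locale main = fdim B nM for B :: "'a::{real_vector,t2_space,first_countable_topology} set" and nM +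
  fixes p :: "'a \<Rightarrow> real" and A :: "'a set" and U0 :: 'a
  assumes lin: "linear_on_sub (span B) p" and Acl: "closed A"
    and A3f: "\<And>X. adm_prices (span B) p A X \<noteq> {} \<and> bdd_below (adm_prices (span B) p A X)"
    and A3c: "continuous_on UNIV (rho (span B) p A)"
    and U0: "U0 \<in> span B" "p U0 = 1"
begin

abbreviation "R X \<equiv> optR (span B) p A X"
abbreviation "rhoB X \<equiv> rho (span B) p A X"

lemma Rmem: "Z \<in> R X \<longleftrightarrow> Z \<in> span B \<and> X + Z \<in> A \<and> p Z = rhoB X"
  unfolding optR_def by simp

lemma rho_tendsto:
  assumes "Xs \<longlonglongrightarrow> X" shows "(\<lambda>n. rhoB (Xs n)) \<longlonglongrightarrow> rhoB X"
proof -
  have "isCont (rho (span B) p A) X" using A3c by (simp add: continuous_on_eq_continuous_at)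
  from isCont_tendsto_compose[OF this assms] show ?thesis .
qed

lemma p_add_U0: "Z \<in> span B \<Longrightarrow> p (Z + s *\<^sub>R U0) = p Z + s"
  using lin U0 unfolding linear_on_sub_def by (simp add: span_scale)

lemma rho_shift: "rhoB (X + t *\<^sub>R U0) = rhoB X - t"
proof -
  have "adm_prices (span B) p A (X + t *\<^sub>R U0) = (\<lambda>x. x - t) ` adm_prices (span B) p A X"
  proof (intro equalityI subsetI)
    fix x assume "x \<in> adm_prices (span B) p A (X + t *\<^sub>R U0)"
    then obtain Z where Z: "x = p Z" "Z \<in> span B" "X + t *\<^sub>R U0 + Z \<in> A"
      unfolding adm_prices_def by blast
    have "Z + t *\<^sub>R U0 \<in> span B" using Z(2) U0 by (simp add: span_add span_diff span_scale)
    moreover have "X + (Z + t *\<^sub>R U0) \<in> A" using Z(3) by (simp add: algebra_simps)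
    moreover have "x = p (Z + t *\<^sub>R U0) - t" using p_add_U0[OF Z(2)] Z(1) by simp
    ultimately show "x \<in> (\<lambda>x. x - t) ` adm_prices (span B) p A X"
      unfolding adm_prices_def by blast
  next
    fix x assume "x \<in> (\<lambda>x. x - t) ` adm_prices (span B) p A X"
    then obtain Z where Z: "x = p Z - t" "Z \<in> span B" "X + Z \<in> A"
      unfolding adm_prices_def by blast
    have "Z + (-t) *\<^sub>R U0 \<in> span B" using Z(2) U0 by (simp add: span_add span_diff span_scale)
    moreover have "X + t *\<^sub>R U0 + (Z + (-t) *\<^sub>R U0) \<in> A" using Z(3) by (simp add: algebra_simps)
    moreover have "x = p (Z + (-t) *\<^sub>R U0)" using p_add_U0[OF Z(2), of "-t"] Z(1) by simp
    ultimately show "x \<in> adm_prices (span B) p A (X + t *\<^sub>R U0)"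
      unfolding adm_prices_def by blast
  qed
  then show ?thesis unfolding rho_def using Inf_shift A3f by metis
qed

lemma not_usc:
  assumes Ys: "Ys \<longlonglongrightarrow> X" and WR: "\<And>k. Ws k \<in> R (Ys k)" and WnR: "\<And>k. Ws k \<notin> R X"
    and Wn: "\<And>k. real k \<le> nM (Ws k)"
  shows "\<not> usc_at (span B) R X"
proof
  assume usc: "usc_at (span B) R X"
  have Wsp: "Ws k \<in> span B" for k using WR[of k] Rmem by blast
  have op: "openin (top_of_set (span B)) (span B - range Ws)"
  proof (rule seq_openin)
    fix z f assume z: "z \<in> span B" "z \<notin> range Ws" and f: "\<And>i. f i \<in> range Ws \<inter> span B"
      and fl: "f \<longlonglongrightarrow> z"
    obtain C where C: "\<forall>k. nM (f k) \<le> C" using conv_bounded[OF _ z(1) fl] f by blast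
    obtain N :: nat where N: "C \<le> real N" using real_arch_simple by blast
    have "f i \<in> Ws ` {..N}" for i
    proof -
      obtain k where k: "f i = Ws k" using f[of i] by blast
      have "real k \<le> C" using Wn[of k] C k by (metis order_trans)
      then have "k \<le> N" using N by linarith
      then show ?thesis using k by blast
    qed
    then have "z \<in> Ws ` {..N}" by (intro closed_sequentially[OF finite_imp_closed _ fl]) auto
    then show False using z(2) by blast
  qed
  have sub: "R X \<subseteq> span B - range Ws" using WnR Rmem by blast
  obtain V where V: "open V" "X \<in> V" "\<And>Y. Y \<in> V \<Longrightarrow> R Y \<subseteq> span B - range Ws"
    using usc op sub unfolding usc_at_def by meson
  obtain k where "Ys k \<in> V"
    using topological_tendstoD[OF Ys V(1,2)] by (meson eventually_sequentially order_refl)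
  then have "Ws k \<in> span B - range Ws" using V(3) WR by blast
  then show False by blast
qed

end

context main begin

lemma b_imp_c:
  assumes b: "\<forall>K. compact K \<longrightarrow> (\<exists>C. \<forall>Z\<in>(\<Union>X\<in>K. R X). nM Z \<le> C)"
  shows "\<forall>X Xs Zs. Xs \<longlonglongrightarrow> X \<longrightarrow> (\<forall>n. Zs n \<in> R (Xs n)) \<longrightarrow>
                (\<exists>Z r. Z \<in> R X \<and> strict_mono r \<and> (Zs \<circ> r) \<longlonglongrightarrow> Z)"
proof (intro allI impI)
  fix X Xs Zs assume Xs: "Xs \<longlonglongrightarrow> X" and Zs: "\<forall>n. Zs n \<in> R (Xs n)"
  obtain C where C: "\<forall>Z\<in>(\<Union>X\<in>insert X (range Xs). R X). nM Z \<le> C"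
    using b[rule_format, OF cpt_seq_lim[OF Xs]] by (elim exE) simp
  have Zsp: "Zs n \<in> span B" for n using Zs by (simp add: Rmem)
  have Cb: "nM (Zs n) \<le> C" for n
  proof -
    have "Zs n \<in> (\<Union>X\<in>insert X (range Xs). R X)" using Zs by blast
    then show ?thesis using C by blast
  qed
  obtain r :: "nat \<Rightarrow> nat" and w where r: "strict_mono r" "w \<in> span B" "(Zs \<circ> r) \<longlonglongrightarrow> w"
    using bounded_subseq[of Zs C, OF Zsp Cb] by blast
  have Xr: "(\<lambda>n. Xs (r n)) \<longlonglongrightarrow> X" using LIMSEQ_subseq_LIMSEQ[OF Xs r(1)] by (simp add: o_def)
  have Zr: "(\<lambda>n. Zs (r n)) \<longlonglongrightarrow> w" using r(3) by (simp add: o_def)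
  have "X + w \<in> A"
  proof (rule closed_sequentially[OF Acl _ tvs_add[OF tvs Xr Zr]])
    fix n show "Xs (r n) + Zs (r n) \<in> A" using Zs by (simp add: Rmem)
  qed
  moreover have "p w = rhoB X"
  proof -
    have l1: "(\<lambda>n. p (Zs (r n))) \<longlonglongrightarrow> p w" by (rule pi_tendsto[OF lin _ r(2) Zr]) (rule Zsp)
    have "p (Zs (r n)) = rhoB (Xs (r n))" for n using Zs by (simp add: Rmem)
    with rho_tendsto[OF Xr] have "(\<lambda>n. p (Zs (r n))) \<longlonglongrightarrow> rhoB X" by simp
    with l1 show ?thesis by (rule LIMSEQ_unique)
  qed
  ultimately have "w \<in> R X" using r(2) by (simp add: Rmem)
  then show "\<exists>Z r. Z \<in> R X \<and> strict_mono r \<and> (Zs \<circ> r) \<longlonglongrightarrow> Z" using r by blast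
qed

lemma unbounded_seq:
  assumes K: "compact K" and nb: "\<not> (\<exists>C. \<forall>Z\<in>(\<Union>X\<in>K. R X). nM Z \<le> C)"
  obtains Xs Zs X r where "\<And>n. Xs n \<in> K" "\<And>n. Zs n \<in> R (Xs n)" "\<And>n. real n < nM (Zs n)"
    "X \<in> K" "strict_mono (r::nat\<Rightarrow>nat)" "(Xs \<circ> r) \<longlonglongrightarrow> X"
proof -
  have "\<exists>X Z. X \<in> K \<and> Z \<in> R X \<and> real n < nM Z" for n :: nat
  proof -
    from nb have "\<not> (\<forall>Z\<in>(\<Union>X\<in>K. R X). nM Z \<le> real n)" by blast
    then show ?thesis by (auto simp: not_le)
  qed
  then obtain Xs Zs where XZ: "\<And>n. Xs n \<in> K" "\<And>n. Zs n \<in> R (Xs n)" "\<And>n. real n < nM (Zs n)"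
    by metis
  obtain X r where "X \<in> K" "strict_mono (r::nat\<Rightarrow>nat)" "(Xs \<circ> r) \<longlonglongrightarrow> X"
    using seq_compactE[OF compact_imp_seq_compact[OF K], of Xs] XZ(1) by blast
  then show ?thesis using that XZ by blast
qed

lemma c_imp_b:
  assumes c: "\<forall>X Xs Zs. Xs \<longlonglongrightarrow> X \<longrightarrow> (\<forall>n. Zs n \<in> R (Xs n)) \<longrightarrow>
                (\<exists>Z r. Z \<in> R X \<and> strict_mono r \<and> (Zs \<circ> r) \<longlonglongrightarrow> Z)"
  shows "\<forall>K. compact K \<longrightarrow> (\<exists>C. \<forall>Z\<in>(\<Union>X\<in>K. R X). nM Z \<le> C)"
proof (intro allI impI, rule ccontr)
  fix K :: "'a set" assume K: "compact K" and nb: "\<not> (\<exists>C. \<forall>Z\<in>(\<Union>X\<in>K. R X). nM Z \<le> C)"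
  obtain Xs Zs X r where XZ: "\<And>n. Xs n \<in> K" "\<And>n. Zs n \<in> R (Xs n)" "\<And>n. real n < nM (Zs n)"
    "X \<in> K" "strict_mono (r::nat\<Rightarrow>nat)" "(Xs \<circ> r) \<longlonglongrightarrow> X"
    using unbounded_seq[OF K nb] by blast
  have "\<forall>n. (Zs \<circ> r) n \<in> R ((Xs \<circ> r) n)" using XZ(2) by simp
  then obtain Z and r' :: "nat \<Rightarrow> nat" where Z: "Z \<in> R X" "strict_mono r'" "((Zs \<circ> r) \<circ> r') \<longlonglongrightarrow> Z"
    using c[rule_format, OF XZ(6)] by blast
  have sp: "((Zs \<circ> r) \<circ> r') k \<in> span B" for k using XZ(2) Rmem by simp
  obtain C where C: "\<forall>k. nM (((Zs \<circ> r) \<circ> r') k) \<le> C"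
    using conv_bounded[of "(Zs \<circ> r) \<circ> r'" Z, OF sp _ Z(3)] Z(1) unfolding Rmem by blast
  obtain N :: nat where N: "C \<le> real N" using real_arch_simple by blast
  have "N \<le> r (r' N)" using seq_suble[OF strict_mono_o[OF XZ(5) Z(2)], of N] by simp
  then have "real N < nM (Zs (r (r' N)))" using XZ(3)[of "r (r' N)"] by linarith
  then show False using C[rule_format, of N] N by simp
qed

lemma c_imp_a:
  assumes c: "\<forall>X Xs Zs. Xs \<longlonglongrightarrow> X \<longrightarrow> (\<forall>n. Zs n \<in> R (Xs n)) \<longrightarrow>
                (\<exists>Z r. Z \<in> R X \<and> strict_mono r \<and> (Zs \<circ> r) \<longlonglongrightarrow> Z)"
  shows "usc_at (span B) R X"
  unfolding usc_at_def
proof (intro allI impI)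
  fix U assume U: "openin (top_of_set (span B)) U \<and> R X \<subseteq> U"
  then have Uo: "openin (top_of_set (span B)) U" and RU: "R X \<subseteq> U" by auto
  from Uo obtain T where T: "open T" "U = span B \<inter> T" unfolding openin_open by blast
  obtain Ab :: "nat \<Rightarrow> 'a set" where Ab: "\<And>i. open (Ab i)" "\<And>i. X \<in> Ab i"
    "\<And>S. open S \<Longrightarrow> X \<in> S \<Longrightarrow> eventually (\<lambda>i. Ab i \<subseteq> S) sequentially"
    using countable_basis_at_decseq[of X] by blast
  show "\<exists>V. open V \<and> X \<in> V \<and> (\<forall>Y\<in>V. R Y \<subseteq> U)"
  proof (rule ccontr)
    assume nc: "\<not> ?thesis"
    have ex: "\<exists>Y Z. Y \<in> Ab i \<and> Z \<in> R Y \<and> Z \<notin> U" for i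
    proof -
      have "\<not> (\<forall>Y\<in>Ab i. R Y \<subseteq> U)" using nc Ab(1,2)[of i] by blast
      then show ?thesis by blast
    qed
    obtain Ys where Ys: "\<And>i. \<exists>Z. Ys i \<in> Ab i \<and> Z \<in> R (Ys i) \<and> Z \<notin> U"
      using ex by metis
    obtain Zs where Zs: "\<And>i. Ys i \<in> Ab i \<and> Zs i \<in> R (Ys i) \<and> Zs i \<notin> U"
      using Ys by metis
    have YZ1: "Ys i \<in> Ab i" and YZ2: "Zs i \<in> R (Ys i)" and YZ3: "Zs i \<notin> U" for i
      using Zs[of i] by auto
    have Ylim: "Ys \<longlonglongrightarrow> X"
    proof (rule topological_tendstoI)
      fix S assume "open S" "X \<in> S"
      from Ab(3)[OF this] show "eventually (\<lambda>i. Ys i \<in> S) sequentially"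
        by (rule eventually_mono) (use YZ1 in auto)
    qed
    have "\<forall>n. Zs n \<in> R (Ys n)" using YZ2 by blast
    then obtain Z and r :: "nat \<Rightarrow> nat" where Z: "Z \<in> R X" "strict_mono r" "(Zs \<circ> r) \<longlonglongrightarrow> Z"
      using c[rule_format, OF Ylim] by blast
    have "Z \<in> T" using Z(1) RU T(2) by blast
    from topological_tendstoD[OF Z(3) T(1) this] obtain k where "(Zs \<circ> r) k \<in> T"
      by (metis eventually_sequentially order_refl)
    moreover have "Zs (r k) \<in> span B" using YZ2[of "r k"] by (simp add: Rmem)
    ultimately have "Zs (r k) \<in> U" using T(2) by simp
    then show False using YZ3 by blast
  qed
qed

lemma a_imp_b:
  assumes a: "\<forall>X. usc_at (span B) R X"
  shows "\<forall>K. compact K \<longrightarrow> (\<exists>C. \<forall>Z\<in>(\<Union>X\<in>K. R X). nM Z \<le> C)"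
proof (intro allI impI, rule ccontr)
  fix K :: "'a set" assume K: "compact K" and nb: "\<not> (\<exists>C. \<forall>Z\<in>(\<Union>X\<in>K. R X). nM Z \<le> C)"
  obtain Xs Zs X r where XZ: "\<And>n. Xs n \<in> K" "\<And>n. Zs n \<in> R (Xs n)" "\<And>n. real n < nM (Zs n)"
    "X \<in> K" "strict_mono (r::nat\<Rightarrow>nat)" "(Xs \<circ> r) \<longlonglongrightarrow> X"
    using unbounded_seq[OF K nb] by blast
  show False
  proof (cases "\<exists>C. \<forall>Z\<in>R X. nM Z \<le> C")
    case True
    then obtain C where C: "\<forall>Z\<in>R X. nM Z \<le> C" by blast
    obtain N :: nat where N: "C \<le> real N" using real_arch_simple by blast
    define Ys where "Ys k = Xs (r (k + N))" for k
    define Ws where "Ws k = Zs (r (k + N))" for k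
    have Ylim: "Ys \<longlonglongrightarrow> X"
      unfolding Ys_def using LIMSEQ_ignore_initial_segment[OF XZ(6), of N] by (simp add: o_def)
    have big: "real k + real N < nM (Ws k)" for k
    proof -
      have "k + N \<le> r (k + N)" using seq_suble[OF XZ(5)] by blast
      then have "real (k + N) \<le> real (r (k + N))" by simp
      then show ?thesis using XZ(3)[of "r (k+N)"] unfolding Ws_def by simp
    qed
    have WR: "Ws k \<in> R (Ys k)" for k unfolding Ws_def Ys_def by (rule XZ(2))
    have WnR: "Ws k \<notin> R X" for k
    proof
      assume "Ws k \<in> R X"
      then have "nM (Ws k) \<le> C" using C by blast
      then show False using big[of k] N by simp
    qed
    have Wn: "real k \<le> nM (Ws k)" for k using big[of k] by simp
    from not_usc[of Ys X Ws, OF Ylim WR WnR Wn] a show False by blast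
  next
    case False
    have ex: "\<exists>Z. Z \<in> R X \<and> real k + nM U0 < nM Z" for k :: nat
    proof -
      from False have "\<not> (\<forall>Z\<in>R X. nM Z \<le> real k + nM U0)" by blast
      then show ?thesis by (auto simp: not_le)
    qed
    obtain zs where zs: "\<And>k::nat. zs k \<in> R X \<and> real k + nM U0 < nM (zs k)" using ex by metis
    have zsR: "zs k \<in> span B" "X + zs k \<in> A" "p (zs k) = rhoB X" for k
      using zs[of k] by (simp_all add: Rmem)
    define t where "t k = inverse (real (Suc k))" for k
    have t: "0 < t k" "t k \<le> 1" for k unfolding t_def by (auto simp: inverse_le_1_iff)
    define Ys where "Ys k = X + t k *\<^sub>R U0" for k
    define Ws where "Ws k = zs k + (- t k) *\<^sub>R U0" for k
    have tl: "t \<longlonglongrightarrow> 0" unfolding t_def by (rule LIMSEQ_inverse_real_of_nat)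
    have "(\<lambda>k. X + t k *\<^sub>R U0) \<longlonglongrightarrow> X + 0 *\<^sub>R U0"
      by (rule tvs_add[OF tvs tendsto_const tvs_scale[OF tvs tl tendsto_const]])
    then have Ylim: "Ys \<longlonglongrightarrow> X" unfolding Ys_def by simp
    have Wsp: "Ws k \<in> span B" for k unfolding Ws_def using zsR(1) U0(1) by (simp add: span_add span_diff span_scale)
    have pW: "p (Ws k) = rhoB X - t k" for k unfolding Ws_def using p_add_U0[OF zsR(1), of k "- t k"] zsR(3)[of k] by simp
    have WR: "Ws k \<in> R (Ys k)" for k
    proof -
      have "Ys k + Ws k = X + zs k" unfolding Ys_def Ws_def by (simp add: algebra_simps)
      moreover have "rhoB (Ys k) = rhoB X - t k" unfolding Ys_def by (rule rho_shift)
      ultimately show ?thesis using Wsp zsR(2) pW by (simp add: Rmem)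
    qed
    have WnR: "Ws k \<notin> R X" for k using pW[of k] t(1)[of k] by (simp add: Rmem)
    have Wn: "real k \<le> nM (Ws k)" for k
    proof -
      have "zs k = Ws k + t k *\<^sub>R U0" unfolding Ws_def by simp
      then have "nM (zs k) \<le> nM (Ws k) + nM (t k *\<^sub>R U0)"
        using nM_tri[OF Wsp span_scale[OF U0(1)]] by simp
      also have "nM (t k *\<^sub>R U0) = t k * nM U0" using nM_scale[OF U0(1)] t(1)[of k] by simp
      also have "t k * nM U0 \<le> nM U0" using t[of k] nM_nonneg[OF U0(1)] by (simp add: mult_left_le_one_le)
      finally show ?thesis using zs[of k] by simp
    qed
    from not_usc[of Ys X Ws, OF Ylim WR WnR Wn] a show False by blast
  qed
qed

end

theorem mainTheorem15:
  fixes ge :: "'a::{real_vector,t2_space,first_countable_topology} \<Rightarrow> 'a \<Rightarrow> bool"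
    and M :: "'a set" and \<pi> :: "'a \<Rightarrow> real" and A :: "'a set" and nM :: "'a \<Rightarrow> real"
  assumes tvs: "is_tvs TYPE('a)"
    and lc: "is_locally_convex TYPE('a)"
    and po_refl: "\<And>x. ge x x"
    and po_antisym: "\<And>x y. ge x y \<Longrightarrow> ge y x \<Longrightarrow> x = y"
    and po_trans: "\<And>x y z. ge x y \<Longrightarrow> ge y z \<Longrightarrow> ge x z"
    and M_sub: "subspace M"
    and M_fin: "\<exists>B. finite B \<and> span B = M"
    and M_dim: "1 < dim M"
    and nM: "is_norm_on M nM"
    and \<pi>_lin: "linear_on_sub M \<pi>"
    and A1: "\<exists>U\<in>M. ge U 0 \<and> \<pi> U = 1"
    and A2_closed: "closed A" and A2_zero: "0 \<in> A" and A2_proper: "A \<noteq> UNIV"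
    and A2_mono: "\<And>X P. X \<in> A \<Longrightarrow> ge P 0 \<Longrightarrow> X + P \<in> A"
    and A3_finite: "\<And>X. adm_prices M \<pi> A X \<noteq> {} \<and> bdd_below (adm_prices M \<pi> A X)"
    and A3_cont: "continuous_on UNIV (rho M \<pi> A)"
  shows "((\<forall>X. usc_at M (optR M \<pi> A) X)
          \<longleftrightarrow> (\<forall>K. compact K \<longrightarrow> (\<exists>C. \<forall>Z\<in>(\<Union>X\<in>K. optR M \<pi> A X). nM Z \<le> C)))
       \<and> ((\<forall>K. compact K \<longrightarrow> (\<exists>C. \<forall>Z\<in>(\<Union>X\<in>K. optR M \<pi> A X). nM Z \<le> C))
          \<longleftrightarrow> (\<forall>X Xs Zs. Xs \<longlonglongrightarrow> X \<longrightarrow> (\<forall>n. Zs n \<in> optR M \<pi> A (Xs n)) \<longrightarrow>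
                (\<exists>Z r. Z \<in> optR M \<pi> A X \<and> strict_mono r \<and> (Zs \<circ> r) \<longlonglongrightarrow> Z)))"
proof -
  obtain B0 where B0: "finite B0" "span B0 = M" using M_fin by blast
  obtain B where B: "B \<subseteq> M" "independent B" "M \<subseteq> span B"
    using maximal_independent_subset[of M] by blast
  have finB: "finite B" using independent_span_bound[OF B0(1) B(2)] B(1) B0(2) by blast
  have SB: "span B = M" by (rule span_subspace[OF B(1) B(3) M_sub])
  obtain U0 where U0: "U0 \<in> M" "ge U0 0" "\<pi> U0 = 1" using A1 by blast
  interpret main B nM \<pi> A U0
  proof (unfold_locales)
    show "is_tvs TYPE('a)" by (rule tvs)
    show "finite B" by (rule finB)
    show "independent B" by (rule B(2))
    show "is_norm_on (span B) nM" using nM SB by simp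
    show "linear_on_sub (span B) \<pi>" using \<pi>_lin SB by simp
    show "closed A" by (rule A2_closed)
    show "\<And>X. adm_prices (span B) \<pi> A X \<noteq> {} \<and> bdd_below (adm_prices (span B) \<pi> A X)"
      using A3_finite SB by simp
    show "continuous_on UNIV (rho (span B) \<pi> A)" using A3_cont SB by simp
    show "U0 \<in> span B" "\<pi> U0 = 1" using U0 SB by auto
  qed
  have MB: "M = span B" using SB by simp
  show ?thesis
    unfolding MB
    apply (intro conjI iffI)
       apply (erule a_imp_b)
      apply (intro allI)
      apply (rule c_imp_a)
      apply (erule b_imp_c)
     apply (erule b_imp_c)
    apply (erule c_imp_b)
    done
qed

end
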